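(* Let $c\in\mathbb{N}$, $c\ge1$, and let $F=(n_F)_{n\ge0}$ with $0_F=1$ and $n_F=c\,n$ for $n\ge1$. Then for all $1\le a\le b$, the layer $\langle\Phi_a\to\Phi_b\rangle$ of the cobweb poset of $F$ admits a tiling by blocks of type $\sigma P_{b-a+1}$.
   Context: Notation: $n_F\equiv F_n$. The cobweb poset of $F$ has, for each $s\ge1$, a level $\Phi_s$ consisting of $s_F$ distinct vertices (levels pairwise disjoint), plus a root level $\Phi_0$ with one vertex; for $x\in\Phi_i$, $y\in\Phi_j$ one has $x<y$ iff $i<j$. For $1\le a\le b$, the layer $\langle\Phi_a\to\Phi_b\rangle$ is the subposet on $\Phi_a\cup\dots\cup\Phi_b$; it has $m=b-a+1$ levels and its maximal chains form the set $\Phi_a\times\dots\times\Phi_b$. For a permutation $\sigma$ of $\{1,\dots,m\}$, a block of type $\sigma P_m$ in this layer is the subposet induced on $V_a\cup\dots\cup V_b$ where $V_{a-1+i}\subseteq\Phi_{a-1+i}$ and $|V_{a-1+i}|=\sigma(i)_F$ for $i=1,\dots,m$; its maximal chains form the set $V_a\times\dots\times V_b$. A tiling of the layer is a finite family of such blocks ($\sigma$ may vary from block to block) whose sets $V_a\times\dots\times V_b$ partition $\Phi_a\times\dots\times\Phi_b$ (pairwise max-disjoint and covering all maximal chains). *)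

theory Defs
  imports Main "HOL-Library.FuncSet" "HOL-Combinatorics.Permutations"
begin

definition cF :: "nat \<Rightarrow> nat \<Rightarrow> nat" where
  "cF c n = (if n = 0 then 1 else c * n)"

text \<open>Level \<Phi>_s of the cobweb poset of F is modelled by the vertex set {0..<F s}
  (tagged implicitly by the level index s, so levels are pairwise disjoint).
  A maximal chain of the layer from \<Phi>_a to \<Phi>_b is an element of
  \<Phi>_a \<times> ... \<times> \<Phi>_b, i.e. an extensional function on {a..b}.\<close>
definition layer_chains :: "(nat \<Rightarrow> nat) \<Rightarrow> nat \<Rightarrow> nat \<Rightarrow> (nat \<Rightarrow> nat) set" where
  "layer_chains F a b = PiE {a..b} (\<lambda>s. {..<F s})"

definition is_block :: "(nat \<Rightarrow> nat) \<Rightarrow> nat \<Rightarrow> nat \<Rightarrow> (nat \<Rightarrow> nat) \<Rightarrow> (nat \<Rightarrow> nat set) \<Rightarrow> bool" where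
  "is_block F a b \<sigma> V \<longleftrightarrow>
     \<sigma> permutes {1..b-a+1} \<and>
     (\<forall>i\<in>{1..b-a+1}. V (a-1+i) \<subseteq> {..<F (a-1+i)} \<and> card (V (a-1+i)) = F (\<sigma> i))"

definition block_chains :: "nat \<Rightarrow> nat \<Rightarrow> (nat \<Rightarrow> nat set) \<Rightarrow> (nat \<Rightarrow> nat) set" where
  "block_chains a b V = PiE {a..b} V"

definition is_tiling :: "(nat \<Rightarrow> nat) \<Rightarrow> nat \<Rightarrow> nat \<Rightarrow> ((nat \<Rightarrow> nat) \<times> (nat \<Rightarrow> nat set)) list \<Rightarrow> bool" where
  "is_tiling F a b Bs \<longleftrightarrow>
     (\<forall>B\<in>set Bs. is_block F a b (fst B) (snd B)) \<and>
     (\<forall>i<length Bs. \<forall>j<length Bs. i \<noteq> j \<longrightarrow>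
        block_chains a b (snd (Bs!i)) \<inter> block_chains a b (snd (Bs!j)) = {}) \<and>
     (\<Union>B\<in>set Bs. block_chains a b (snd B)) = layer_chains F a b"

end

theory Submission
  imports Defs
begin

lemma PiE_split:
  assumes "p0 \<in> P"
  shows "f \<in> PiE P V \<longleftrightarrow> f p0 \<in> V p0 \<and> f(p0:=undefined) \<in> PiE (P-{p0}) V"
  using assms unfolding PiE_iff extensional_def by auto

lemma bij_insert_aux:
  assumes "bij_betw f A B" "x \<notin> A" "y \<notin> B" "f x = y"
  shows "bij_betw f (insert x A) (insert y B)"
proof -
  have i: "inj_on f A" and im: "f ` A = B" using assms(1) by (simp_all add: bij_betw_def)
  have "f x \<notin> f ` (A - {x})" using im assms(3,4) by blast
  then have "inj_on f (insert x A)" using i inj_on_insert by blast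
  moreover have "f ` insert x A = insert y B" using im assms(4) by simp
  ultimately show ?thesis by (simp add: bij_betw_def)
qed

definition good where
  "good c m P X \<V> \<longleftrightarrow> finite \<V> \<and>
     (\<forall>V\<in>\<V>. (\<exists>\<tau>. bij_betw \<tau> P {1..m} \<and> (\<forall>p\<in>P. V p \<subseteq> X p \<and> card (V p) = c * \<tau> p))
          \<and> (\<forall>p. p \<notin> P \<longrightarrow> V p = {})) \<and>
     pairwise (\<lambda>V W. PiE P V \<inter> PiE P W = {}) \<V> \<and>
     \<Union> (PiE P ` \<V>) = PiE P X"

lemma goodD1: "good c m P X VS \<Longrightarrow> finite VS"
  unfolding good_def by simp
lemma goodD2: "good c m P X VS \<Longrightarrow> V \<in> VS \<Longrightarrow> \<exists>\<tau>. bij_betw \<tau> P {1..m} \<and> (\<forall>p\<in>P. V p \<subseteq> X p \<and> card (V p) = c * \<tau> p)"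
  unfolding good_def by simp
lemma goodD3: "good c m P X VS \<Longrightarrow> V \<in> VS \<Longrightarrow> p \<notin> P \<Longrightarrow> V p = {}"
  unfolding good_def by simp
lemma goodD4: "good c m P X VS \<Longrightarrow> V \<in> VS \<Longrightarrow> W \<in> VS \<Longrightarrow> V \<noteq> W \<Longrightarrow> PiE P V \<inter> PiE P W = {}"
  unfolding good_def pairwise_def by blast
lemma goodD5: "good c m P X VS \<Longrightarrow> \<Union> (PiE P ` VS) = PiE P X"
  unfolding good_def by simp

lemma main_aux:
  "\<forall>a m (P::'a set) (d::'a \<Rightarrow> nat) (X::'a \<Rightarrow> 'b set). a + m = n \<longrightarrow> finite P \<longrightarrow> card P = m \<longrightarrow> bij_betw d P {a..<a+m} \<longrightarrow>
   (\<forall>p\<in>P. finite (X p) \<and> card (X p) = c * d p) \<longrightarrow> (\<exists>\<V>. good c m P X \<V>)"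
proof (induction n rule: less_induct)
  case (less n)
  show ?case
  proof (intro allI impI)
  fix a m and P :: "'a set" and d :: "'a \<Rightarrow> nat" and X :: "'a \<Rightarrow> 'b set"
  assume A2: "a + m = n" and A3: "finite P" and A4: "card P = m" and A5: "bij_betw d P {a..<a+m}"
    and A6: "\<forall>p\<in>P. finite (X p) \<and> card (X p) = c * d p"
  note IH = less[rule_format]
  show "\<exists>\<V>. good c m P X \<V>"
  proof (cases "m = 0")
    case True
    then have "P = {}" using A3 A4 by simp
    then show ?thesis using True
      by (intro exI[of _ "{\<lambda>_. {}}"]) (simp add: good_def bij_betw_def)
  next
    case m: False
    show ?thesis
    proof (cases "a = 0")
      case True
      have "0 \<in> d ` P" using A5 True m by (simp add: bij_betw_def)
      then obtain p where p: "p \<in> P" "d p = 0" by (metis imageE)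
      have "finite (X p)" "card (X p) = 0" using A6 p by auto
      then have "X p = {}" by simp
      then have "PiE P X = {}" using \<open>p \<in> P\<close> by (auto simp: PiE_iff)
      then show ?thesis by (intro exI[of _ "{}"]) (simp add: good_def)
    next
      case a: False
      define p0 where "p0 = inv_into P d (a+m-1)"
      have p0P: "p0 \<in> P" and dp0: "d p0 = a+m-1"
        using A5 a m unfolding p0_def
        by (auto intro!: inv_into_into f_inv_into_f simp: bij_betw_def)
      have fin0: "finite (X p0)" and c0: "card (X p0) = c*(a+m-1)" using A6 p0P dp0 by auto
      obtain Y where Y: "Y \<subseteq> X p0" "card Y = c*m"
      proof -
        have "m \<le> a+m-1" using a by simp
        then have "c*m \<le> c*(a+m-1)" by (rule mult_le_mono2)
        then have "c*m \<le> card (X p0)" using c0 by simp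
        from obtain_subset_with_card_n[OF this] obtain T where "T \<subseteq> X p0" "card T = c*m" by blast
        then show ?thesis by (rule that)
      qed
      define Z where "Z = X p0 - Y"
      have cc: "c*(a+m-1) = c*m + c*(a-1)" using a by (cases a) (auto simp: algebra_simps)
      have cZ: "card Z = c*(a-1)" unfolding Z_def using Y fin0 c0 cc
        by (simp add: card_Diff_subset finite_subset)
      have fY: "finite Y" using Y fin0 finite_subset by blast
      have fZ: "finite Z" using fin0 Z_def by auto
      have bij1: "bij_betw d (P-{p0}) {a..<a+(m-1)}"
      proof -
        have "bij_betw d (P-{p0}) ({a..<a+m} - {d p0})"
          using A5 p0P by (intro bij_betw_DiffI[of d P _ "{p0}" "{d p0}"]) (auto simp: bij_betw_def)
        moreover have "{a..<a+m} - {d p0} = {a..<a+(m-1)}" using dp0 m by auto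
        ultimately show ?thesis by simp
      qed
      have "\<exists>V. good c (m-1) (P-{p0}) X V"
      proof (rule IH[of "a+(m-1)" a "m-1" "P-{p0}" d X])
        show "a + (m-1) < n" using A2 m by simp
        show "finite (P-{p0})" using A3 by simp
        show "card (P-{p0}) = m-1" using A3 A4 p0P by simp
        show "bij_betw d (P-{p0}) {a..<a+(m-1)}" by (rule bij1)
        show "\<And>p. p \<in> P-{p0} \<Longrightarrow> finite (X p) \<and> card (X p) = c * d p" using A6 by blast
      qed (simp_all)?
      then obtain V1 where g1: "good c (m-1) (P-{p0}) X V1" by blast
      define d2 where "d2 = d(p0 := a-1)"
      define X2 where "X2 = X(p0 := Z)"
      have bij2: "bij_betw d2 P {a-1..<a-1+m}"
      proof -
        have "bij_betw d2 (P-{p0}) {a..<a+(m-1)}"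
          using bij1 unfolding d2_def by (rule bij_betw_cong[THEN iffD1, rotated]) auto
        then have "bij_betw d2 (insert p0 (P-{p0})) (insert (a-1) {a..<a+(m-1)})"
          by (rule bij_insert_aux) (use a in \<open>auto simp: d2_def\<close>)
        moreover have "insert p0 (P-{p0}) = P" using p0P by auto
        moreover have "insert (a-1) {a..<a+(m-1)} = {a-1..<a-1+m}" using a m by auto
        ultimately show ?thesis by simp
      qed
      have h6: "\<forall>p\<in>P. finite (X2 p) \<and> card (X2 p) = c * d2 p"
        using A6 fZ cZ by (auto simp: X2_def d2_def)
      have "\<exists>V. good c m P X2 V"
      proof (rule IH[of "a-1+m" "a-1" m P d2 X2])
        show "a-1+m < n" using A2 a by simp
      qed (use A3 A4 bij2 h6 in simp_all)
      then obtain V2 where g2: "good c m P X2 V2" by blast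
      define V1' where "V1' = (\<lambda>V. V(p0:=Y)) ` V1"
      have YZ: "Y \<inter> Z = {}" "Y \<union> Z = X p0" using Y unfolding Z_def by auto
      have blk1: "\<forall>V\<in>V1'. (\<exists>\<tau>. bij_betw \<tau> P {1..m} \<and> (\<forall>p\<in>P. V p \<subseteq> X p \<and> card (V p) = c * \<tau> p))
          \<and> (\<forall>p. p \<notin> P \<longrightarrow> V p = {})"
      proof
        fix V' assume "V' \<in> V1'"
        then obtain V where V: "V \<in> V1" "V' = V(p0:=Y)" unfolding V1'_def by auto
        obtain \<tau> where t: "bij_betw \<tau> (P-{p0}) {1..m-1}"
            "\<forall>p\<in>P-{p0}. V p \<subseteq> X p \<and> card (V p) = c * \<tau> p"
          using goodD2[OF g1 V(1)] by blast
        have out: "\<forall>p. p \<notin> P-{p0} \<longrightarrow> V p = {}" using goodD3[OF g1 V(1)] by blast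
        have "bij_betw (\<tau>(p0:=m)) (P-{p0}) {1..m-1}"
          using t(1) by (rule bij_betw_cong[THEN iffD1, rotated]) auto
        then have "bij_betw (\<tau>(p0:=m)) (insert p0 (P-{p0})) (insert m {1..m-1})"
          by (rule bij_insert_aux) auto
        moreover have "insert p0 (P-{p0}) = P" using p0P by auto
        moreover have "insert m {1..m-1} = {1..m}" using m by auto
        ultimately have "bij_betw (\<tau>(p0:=m)) P {1..m}" by simp
        moreover have "\<forall>p\<in>P. V' p \<subseteq> X p \<and> card (V' p) = c * (\<tau>(p0:=m)) p"
          using t(2) V(2) Y by auto
        moreover have "\<forall>p. p \<notin> P \<longrightarrow> V' p = {}" using out V(2) p0P by auto
        ultimately show "(\<exists>\<tau>. bij_betw \<tau> P {1..m} \<and> (\<forall>p\<in>P. V' p \<subseteq> X p \<and> card (V' p) = c * \<tau> p))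
          \<and> (\<forall>p. p \<notin> P \<longrightarrow> V' p = {})" by blast
      qed
      have blk2: "\<forall>V\<in>V2. (\<exists>\<tau>. bij_betw \<tau> P {1..m} \<and> (\<forall>p\<in>P. V p \<subseteq> X p \<and> card (V p) = c * \<tau> p))
          \<and> (\<forall>p. p \<notin> P \<longrightarrow> V p = {})"
      proof
        fix V assume "V \<in> V2"
        then obtain \<tau> where "bij_betw \<tau> P {1..m}" "\<forall>p\<in>P. V p \<subseteq> X2 p \<and> card (V p) = c * \<tau> p"
          using goodD2[OF g2] by blast
        moreover have "\<forall>p. p \<notin> P \<longrightarrow> V p = {}" using goodD3[OF g2 \<open>V \<in> V2\<close>] by blast
        moreover have "X2 p \<subseteq> X p" for p using Z_def X2_def by auto
        ultimately show "(\<exists>\<tau>. bij_betw \<tau> P {1..m} \<and> (\<forall>p\<in>P. V p \<subseteq> X p \<and> card (V p) = c * \<tau> p))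
          \<and> (\<forall>p. p \<notin> P \<longrightarrow> V p = {})" by blast
      qed
      have V1p0: "V p0 = {}" if "V \<in> V1" for V using goodD3[OF g1 that] by blast
      have V2p0: "V p0 \<subseteq> Z" if "V \<in> V2" for V using goodD2[OF g2 that] p0P unfolding X2_def
        by (metis fun_upd_same)
      have mem1: "f \<in> PiE P V' \<longleftrightarrow> f p0 \<in> Y \<and> f(p0:=undefined) \<in> PiE (P-{p0}) V"
        if "V' = V(p0:=Y)" for f V V'
      proof -
        have "PiE (P-{p0}) V' = PiE (P-{p0}) V" using that by (intro PiE_cong) auto
        then show ?thesis using PiE_split[OF p0P, of f V'] that by simp
      qed
      have disj: "pairwise (\<lambda>V W. PiE P V \<inter> PiE P W = {}) (V1' \<union> V2)"
      proof (rule pairwiseI)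
        fix V W assume VW: "V \<in> V1' \<union> V2" "W \<in> V1' \<union> V2" "V \<noteq> W"
        show "PiE P V \<inter> PiE P W = {}"
        proof (rule ccontr)
          assume "PiE P V \<inter> PiE P W \<noteq> {}"
          then obtain f where f: "f \<in> PiE P V" "f \<in> PiE P W" by auto
          have fp: "f p0 \<in> V p0" "f p0 \<in> W p0" using f p0P by auto
          consider "V \<in> V1'" "W \<in> V1'" | "V \<in> V2" "W \<in> V2" | "V \<in> V1'" "W \<in> V2" | "V \<in> V2" "W \<in> V1'"
            using VW by blast
          then show False
          proof cases
            case 1
            then obtain V0 W0 where "V0 \<in> V1" "W0 \<in> V1" "V = V0(p0:=Y)" "W = W0(p0:=Y)"
              unfolding V1'_def by auto
            moreover have "V0 \<noteq> W0" using calculation VW(3) by auto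
            moreover have "f(p0:=undefined) \<in> PiE (P-{p0}) V0" using mem1[OF \<open>V = V0(p0:=Y)\<close>] f(1) by blast
            moreover have "f(p0:=undefined) \<in> PiE (P-{p0}) W0" using mem1[OF \<open>W = W0(p0:=Y)\<close>] f(2) by blast
            ultimately show False using goodD4[OF g1, of V0 W0] by blast
          next
            case 2 then show False using f VW(3) goodD4[OF g2, of V W] by blast
          next
            case 3
            then have "V p0 = Y" unfolding V1'_def by auto
            then show False using fp V2p0[OF 3(2)] YZ by auto
          next
            case 4
            then have "W p0 = Y" unfolding V1'_def by auto
            then show False using fp V2p0[OF 4(1)] YZ by auto
          qed
        qed
      qed
      have cover: "\<Union> (PiE P ` (V1' \<union> V2)) = PiE P X"
      proof -
        have "\<Union> (PiE P ` V1') = {f \<in> PiE P X. f p0 \<in> Y}"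
        proof -
          have "\<Union> (PiE P ` V1') = {f. f p0 \<in> Y \<and> f(p0:=undefined) \<in> \<Union> (PiE (P-{p0}) ` V1)}"
            unfolding V1'_def by (auto simp: mem1[OF refl]; blast)
          also have "\<dots> = {f. f p0 \<in> Y \<and> f(p0:=undefined) \<in> PiE (P-{p0}) X}"
            using goodD5[OF g1] by simp
          also have "\<dots> = {f \<in> PiE P X. f p0 \<in> Y}"
            using PiE_split[OF p0P, of _ X] Y by auto
          finally show ?thesis .
        qed
        moreover have "\<Union> (PiE P ` V2) = {f \<in> PiE P X. f p0 \<in> Z}"
        proof -
          have "\<Union> (PiE P ` V2) = PiE P X2" using goodD5[OF g2] by simp
          also have "\<dots> = {f \<in> PiE P X. f p0 \<in> Z}"
          proof -
            have e: "PiE (P-{p0}) X2 = PiE (P-{p0}) X" unfolding X2_def by (intro PiE_cong) auto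
            show ?thesis
            proof (rule set_eqI)
              fix f show "f \<in> PiE P X2 \<longleftrightarrow> f \<in> {f \<in> PiE P X. f p0 \<in> Z}"
                using PiE_split[OF p0P, of f X2] PiE_split[OF p0P, of f X] e
                unfolding X2_def Z_def by auto
            qed
          qed
          finally show ?thesis .
        qed
        ultimately show ?thesis using YZ p0P by auto
      qed
      have "finite V1'" using goodD1[OF g1] unfolding V1'_def by auto
      moreover have "finite V2" using goodD1[OF g2] by auto
      ultimately have "good c m P X (V1' \<union> V2)"
        unfolding good_def ball_Un using blk1 blk2 disj cover by simp
      then show ?thesis by blast
    qed
  qed
  qed
qed

lemma main_lemma:
  "finite P \<Longrightarrow> card P = m \<Longrightarrow> bij_betw d P {a..<a+m} \<Longrightarrow>
   (\<forall>p\<in>P. finite (X p) \<and> card (X p) = c * d p) \<Longrightarrow> \<exists>\<V>. good c m P X \<V>"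
  using main_aux[where n="a+m" and c=c] by blast

theorem mainTheorem6:
  fixes c a b :: nat
  assumes "c \<ge> 1" and "1 \<le> a" and "a \<le> b"
  shows "\<exists>Bs. is_tiling (cF c) a b Bs"
proof -
  define m where "m = b - a + 1"
  define X where "X = (\<lambda>s. {..<cF c s})"
  have bij: "bij_betw id {a..b} {a..<a+m}" unfolding m_def using assms
    by (metis Suc_diff_le Suc_eq_plus1 add_Suc_right atLeastLessThanSuc_atLeastAtMost
        bij_betw_id le_add_diff_inverse)
  have "\<forall>p\<in>{a..b}. finite (X p) \<and> card (X p) = c * id p" using assms
    unfolding X_def cF_def by auto
  then obtain VS where g: "good c m {a..b} X VS"
  proof -
    have "card {a..b} = m" unfolding m_def using assms by simp
    then have "\<exists>VS. good c m {a..b} X VS"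
      by (rule main_lemma[OF finite_atLeastAtMost _ bij
      \<open>\<forall>p\<in>{a..b}. finite (X p) \<and> card (X p) = c * id p\<close>])
    then show ?thesis using that by blast
  qed
  obtain xs where xs: "set xs = VS" "distinct xs"
    using goodD1[OF g] finite_distinct_list by blast
  define sg where "sg = (\<lambda>(V::nat \<Rightarrow> nat set) i. if i \<in> {1..m} then card (V (a-1+i)) div c else i)"
  define Bs where "Bs = map (\<lambda>V. (sg V, V)) xs"
  have blk: "is_block (cF c) a b (sg V) V" if V: "V \<in> VS" for V
  proof -
    obtain \<tau> where t: "bij_betw \<tau> {a..b} {1..m}" "\<forall>p\<in>{a..b}. V p \<subseteq> X p \<and> card (V p) = c * \<tau> p"
      using goodD2[OF g V] by blast
    have eq: "sg V i = \<tau> (a-1+i)" if "i \<in> {1..m}" for i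
    proof -
      have "a-1+i \<in> {a..b}" using that assms unfolding m_def by auto
      then show ?thesis using t(2) that assms unfolding sg_def by auto
    qed
    have b1: "bij_betw (\<lambda>i. a-1+i) {1..m} {a..b}"
      unfolding m_def using assms
      by (intro bij_betw_byWitness[where f'="\<lambda>j. j-(a-1)"]) auto
    have "bij_betw (\<tau> \<circ> (\<lambda>i. a-1+i)) {1..m} {1..m}" using bij_betw_trans[OF b1 t(1)] .
    then have "bij_betw (sg V) {1..m} {1..m}"
      by (rule bij_betw_cong[THEN iffD1, rotated]) (auto simp: eq)
    then have perm: "sg V permutes {1..m}"
      by (rule bij_imp_permutes) (auto simp: sg_def)
    have "\<forall>i\<in>{1..m}. V (a-1+i) \<subseteq> {..<cF c (a-1+i)} \<and> card (V (a-1+i)) = cF c (sg V i)"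
    proof
      fix i assume i: "i \<in> {1..m}"
      have ai: "a-1+i \<in> {a..b}" using i assms unfolding m_def by auto
      have "\<tau> (a-1+i) \<in> {1..m}" using t(1) ai by (auto simp: bij_betw_def)
      show "V (a-1+i) \<subseteq> {..<cF c (a-1+i)} \<and> card (V (a-1+i)) = cF c (sg V i)"
      proof
        show "V (a-1+i) \<subseteq> {..<cF c (a-1+i)}" using t(2) ai unfolding X_def by blast
        have "cF c (sg V i) = c * \<tau> (a-1+i)" using eq[OF i] \<open>\<tau> (a-1+i) \<in> {1..m}\<close>
          unfolding cF_def by auto
        then show "card (V (a-1+i)) = cF c (sg V i)" using t(2) ai by simp
      qed
    qed
    then show ?thesis using perm unfolding is_block_def m_def by simp
  qed
  have "is_tiling (cF c) a b Bs"
    unfolding is_tiling_def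
  proof (intro conjI)
    show "\<forall>B\<in>set Bs. is_block (cF c) a b (fst B) (snd B)" using blk xs unfolding Bs_def by auto
    show "\<forall>i<length Bs. \<forall>j<length Bs. i \<noteq> j \<longrightarrow>
        block_chains a b (snd (Bs!i)) \<inter> block_chains a b (snd (Bs!j)) = {}"
    proof (intro allI impI)
      fix i j assume "i < length Bs" "j < length Bs" "i \<noteq> j"
      then have "xs!i \<noteq> xs!j" "xs!i \<in> VS" "xs!j \<in> VS" using xs unfolding Bs_def
        by (auto simp: nth_eq_iff_index_eq)
      then have "PiE {a..b} (xs!i) \<inter> PiE {a..b} (xs!j) = {}" using goodD4[OF g] by blast
      then show "block_chains a b (snd (Bs!i)) \<inter> block_chains a b (snd (Bs!j)) = {}"
        using \<open>i < length Bs\<close> \<open>j < length Bs\<close> unfolding block_chains_def Bs_def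
        by simp
    qed
    show "(\<Union>B\<in>set Bs. block_chains a b (snd B)) = layer_chains (cF c) a b"
    proof -
      have "(\<Union>B\<in>set Bs. block_chains a b (snd B)) = \<Union> (PiE {a..b} ` VS)"
        unfolding Bs_def block_chains_def using xs(1) by auto
      also have "\<dots> = PiE {a..b} X" by (rule goodD5[OF g])
      finally show ?thesis unfolding layer_chains_def X_def .
    qed
  qed
  then show ?thesis by blast
qed

end
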